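(* Let $k$ be a field and let $d,m$ be integers with $d$ odd and $5\le d<m-1$. Set $a=(d+1)/2$. Then \[ k[\Delta(d,m)]\cong k[x_1,\dots,x_m]/(I_{a,2,m-1},\; x_1x_m I_{a-1,3,m-2}). \]
   Context: For integers $2\le d<m$, $\Delta(d,m)$ denotes the boundary simplicial complex of the cyclic polytope $C_d(m)$, the convex hull in $\mathbb{R}^d$ of $f(t_1),\dots,f(t_m)$ with $t_1<\dots<t_m$ real and $f(t)=(t,t^2,\dots,t^d)$; vertex $i$ corresponds to $f(t_i)$, and the faces are $\emptyset$ and the vertex sets of proper faces of $C_d(m)$. $k[\Delta]=k[x_1,\dots,x_m]/I_\Delta$ is the Stanley–Reisner ring, $I_\Delta$ being generated by the squarefree monomials $\prod_{t\in W}x_t$ with $W\notin\Delta$. For positive integers $a,p,q$ with $p<q$ and $2a\le q-p+2$, $I_{a,p,q}$ denotes the ideal generated by all monomials $x_{t_1}\cdots x_{t_a}$ with $p\le t_1$, $t_a\le q$ and $t_j+2\le t_{j+1}$ for $1\le j\le a-1$. *)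

theory Defs
  imports "HOL-Analysis.Analysis" "HOL-Library.Poly_Mapping" "HOL-Algebra.QuotRing"
begin

type_synonym 'k mpoly = "(nat \<Rightarrow>\<^sub>0 nat) \<Rightarrow>\<^sub>0 'k"

definition pvar :: "nat \<Rightarrow> 'k::comm_ring_1 mpoly" where
  "pvar i = Poly_Mapping.single (Poly_Mapping.single i 1) 1"

definition pconst :: "'k::comm_ring_1 \<Rightarrow> 'k mpoly" where
  "pconst c = Poly_Mapping.single 0 c"

definition poly_ring_m :: "nat \<Rightarrow> ('k::field mpoly) ring" where
  "poly_ring_m m = \<lparr>carrier = {p. \<forall>\<mu>\<in>Poly_Mapping.keys p. Poly_Mapping.keys \<mu> \<subseteq> {1..m}},
                    monoid.mult = (*), one = 1, zero = 0, add = (+)\<rparr>"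

definition sqf_monomial :: "nat set \<Rightarrow> 'k::comm_ring_1 mpoly" where
  "sqf_monomial W = (\<Prod>t\<in>W. pvar t)"

text \<open>Isomorphism of k-algebras between two quotients of k[x_1,...,x_m]:
  a ring isomorphism that is compatible with the k-structure (sends the class of
  each constant c to the class of c).\<close>
definition kalg_iso_quot :: "nat \<Rightarrow> 'k::field mpoly set \<Rightarrow> 'k mpoly set \<Rightarrow> bool" where
  "kalg_iso_quot m I J \<longleftrightarrow>
     (\<exists>\<phi> \<in> ring_iso (poly_ring_m m Quot I) (poly_ring_m m Quot J).
        \<forall>c. \<phi> (I +>\<^bsub>poly_ring_m m\<^esub> pconst c) = J +>\<^bsub>poly_ring_m m\<^esub> pconst c)"

text \<open>Coordinates of R^d are represented by a finite type 'n with d = CARD('n); we fix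
  a numbering of the coordinates by 1..d.\<close>
definition coord_index :: "'n::finite \<Rightarrow> nat" where
  "coord_index = (SOME r. bij_betw r (UNIV::'n set) {1..CARD('n)})"

definition moment :: "real \<Rightarrow> real ^ 'n::finite" where
  "moment s = (\<chi> j. s ^ coord_index j)"

definition cyclic_polytope :: "'n::finite itself \<Rightarrow> (nat \<Rightarrow> real) \<Rightarrow> nat \<Rightarrow> (real ^ 'n) set" where
  "cyclic_polytope _ t m = convex hull ((\<lambda>i. moment (t i) :: real ^ 'n) ` {1..m})"

text \<open>Faces of the boundary complex Delta(d,m): vertex sets of proper faces of C_d(m)
  (the empty face included).\<close>
definition cyclic_boundary_complex :: "'n::finite itself \<Rightarrow> (nat \<Rightarrow> real) \<Rightarrow> nat \<Rightarrow> nat set set" where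
  "cyclic_boundary_complex T t m =
     {W. \<exists>F. F face_of cyclic_polytope T t m \<and> F \<noteq> cyclic_polytope T t m \<and>
             W = {i\<in>{1..m}. (moment (t i) :: real ^ 'n) \<in> F}}"

definition stanley_reisner_ideal :: "nat \<Rightarrow> nat set set \<Rightarrow> 'k::field mpoly set" where
  "stanley_reisner_ideal m \<Delta> =
     genideal (poly_ring_m m) {sqf_monomial W | W. W \<subseteq> {1..m} \<and> W \<notin> \<Delta>}"

text \<open>Generators of I_{a,p,q}: x_{t_1}...x_{t_a} with p <= t_1, t_a <= q, t_j + 2 <= t_{j+1};
  the index sequence is recorded as the set of its entries.\<close>
definition gens_I :: "nat \<Rightarrow> nat \<Rightarrow> nat \<Rightarrow> 'k::comm_ring_1 mpoly set" where
  "gens_I a p q = {sqf_monomial S | S. S \<subseteq> {p..q} \<and> card S = a \<and>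
                      (\<forall>x\<in>S. \<forall>y\<in>S. x < y \<longrightarrow> x + 2 \<le> y)}"

end

theory Submission
  imports Defs "HOL-Computational_Algebra.Polynomial"
begin


definition gap2 :: "nat set \<Rightarrow> bool" where
  "gap2 S \<longleftrightarrow> (\<forall>x\<in>S. \<forall>y\<in>S. x < y \<longrightarrow> x + 2 \<le> y)"

definition forb :: "nat \<Rightarrow> nat \<Rightarrow> nat set \<Rightarrow> bool" where
  "forb a m W \<longleftrightarrow> (\<exists>S. S \<subseteq> W \<inter> {2..m-1} \<and> card S = a \<and> gap2 S) \<or>
     (1 \<in> W \<and> m \<in> W \<and> (\<exists>S. S \<subseteq> W \<inter> {3..m-2} \<and> card S = a - 1 \<and> gap2 S))"

lemma sqf_single: "finite T \<Longrightarrow> (sqf_monomial T :: 'k::field mpoly) = Poly_Mapping.single (\<Sum>t\<in>T. Poly_Mapping.single t 1) 1"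
  unfolding sqf_monomial_def
proof (induction T rule: finite_induct)
  case empty then show ?case by (simp add: one_poly_mapping.abs_eq single.abs_eq) 
next
  case (insert x F) then show ?case by (simp add: pvar_def mult_single)
qed

lemma keys_sum_single: "finite T \<Longrightarrow> Poly_Mapping.keys (\<Sum>t\<in>T. Poly_Mapping.single t (1::nat)) \<subseteq> T"
proof (induction T rule: finite_induct)
  case (insert x F) then show ?case using keys_add[of "Poly_Mapping.single x (1::nat)" "\<Sum>t\<in>F. Poly_Mapping.single t 1"] by auto
qed simp

lemma sqf_carrier: "T \<subseteq> {1..m} \<Longrightarrow> (sqf_monomial T :: 'k::field mpoly) \<in> carrier (poly_ring_m m)"
  using finite_subset[of T "{1..m}"] keys_sum_single[of T]
  by (auto simp: poly_ring_m_def sqf_single)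

lemma sqf_split: "finite W \<Longrightarrow> S \<subseteq> W \<Longrightarrow> (sqf_monomial W :: 'k::field mpoly) = sqf_monomial S * sqf_monomial (W - S)"
  unfolding sqf_monomial_def
  by (metis Diff_disjoint Diff_partition finite_Diff finite_subset prod.union_disjoint)

lemma sqf_ends: "finite S \<Longrightarrow> 1 \<notin> S \<Longrightarrow> m \<notin> S \<Longrightarrow> m \<noteq> 1 \<Longrightarrow>
   (sqf_monomial (insert 1 (insert m S)) :: 'k::field mpoly) = pvar 1 * pvar m * sqf_monomial S"
  unfolding sqf_monomial_def by (simp add: mult.assoc)

lemma sub32: fixes S :: "nat set" assumes "S \<subseteq> {3..m-2}" "3 \<le> m" shows "1\<notin>S" "m\<notin>S" "insert 1 (insert m S)\<subseteq>{1..m}"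
proof -
  have h: "3 \<le> x \<and> x \<le> m - 2" if "x \<in> S" for x using assms that by (auto simp: subset_eq)
  show "1\<notin>S" using h by fastforce
  show "m\<notin>S" using h by fastforce
  show "insert 1 (insert m S)\<subseteq>{1..m}"
  proof
    fix x assume "x \<in> insert 1 (insert m S)"
    then show "x \<in> {1..m}" using h[of x] assms(2) by auto
  qed
qed

lemma alg_part:
  fixes \<Delta> :: "nat set set"
  assumes char: "\<And>W. W \<subseteq> {1..m} \<Longrightarrow> W \<in> \<Delta> \<longleftrightarrow> \<not> forb a m W"
    and a2: "2 \<le> a" and m3: "3 \<le> m"
  shows "kalg_iso_quot m
           (stanley_reisner_ideal m \<Delta> :: 'k::field mpoly set)
           (genideal (poly_ring_m m)
              (gens_I a 2 (m - 1) \<union> {pvar 1 * pvar m * g | g. g \<in> gens_I (a - 1) 3 (m - 2)}))"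
proof -
  define R where "R = (poly_ring_m m :: 'k mpoly ring)"
  define X where "X = ({sqf_monomial W | W. W \<subseteq> {1..m} \<and> W \<notin> \<Delta>} :: 'k mpoly set)"
  define Y where "Y = ((gens_I a 2 (m - 1) \<union> {pvar 1 * pvar m * g | g. g \<in> gens_I (a - 1) 3 (m - 2)}) :: 'k mpoly set)"
  have YX: "Y \<subseteq> X"
  proof
    fix y assume "y \<in> Y"
    then consider S where "y = sqf_monomial S" "S \<subseteq> {2..m-1}" "card S = a" "gap2 S"
      | S where "y = pvar 1 * pvar m * sqf_monomial S" "S \<subseteq> {3..m-2}" "card S = a - 1" "gap2 S"
      unfolding Y_def gens_I_def gap2_def by blast
    then show "y \<in> X"
    proof cases
      case 1
      have "S \<subseteq> {1..m}" by (rule order_trans[OF 1(2)]) auto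
      moreover have "forb a m S" unfolding forb_def using 1 by blast
      ultimately show ?thesis using char 1 unfolding X_def by blast
    next
      case 2
      have fin: "finite S" using 2 finite_subset by blast
      have n1: "1 \<notin> S" "m \<notin> S" using sub32[OF 2(2) m3] by auto
      have e: "sqf_monomial (insert 1 (insert m S)) = (pvar 1 * pvar m * sqf_monomial S :: 'k mpoly)"
        by (rule sqf_ends[OF fin n1]) (use m3 in auto)
      have "y = sqf_monomial (insert 1 (insert m S))" using 2(1) e by simp
      moreover have "insert 1 (insert m S) \<subseteq> {1..m}" using sub32[OF 2(2) m3] by auto
      moreover have "forb a m (insert 1 (insert m S))" unfolding forb_def using 2 by blast
      ultimately show ?thesis using char unfolding X_def by blast
    qed
  qed
  have XY: "X \<subseteq> I" if "ideal I R" "Y \<subseteq> I" for I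
  proof
    fix x assume "x \<in> X"
    then obtain W where W: "x = sqf_monomial W" "W \<subseteq> {1..m}" "W \<notin> \<Delta>" unfolding X_def by blast
    then have fW: "finite W" using finite_subset by blast
    have "forb a m W" using char W by blast
    then obtain P where P: "P \<subseteq> W" "sqf_monomial P \<in> Y"
      unfolding forb_def
    proof (elim disjE exE conjE)
      fix S assume S: "S \<subseteq> W \<inter> {2..m-1}" "card S = a" "gap2 S" and th: "\<And>P. P \<subseteq> W \<Longrightarrow> sqf_monomial P \<in> Y \<Longrightarrow> thesis"
      show thesis by (rule th[of S]) (use S in \<open>auto simp: Y_def gens_I_def gap2_def\<close>)
    next
      fix S assume S: "S \<subseteq> W \<inter> {3..m-2}" "card S = a - 1" "gap2 S" "1 \<in> W" "m \<in> W"
        and th: "\<And>P. P \<subseteq> W \<Longrightarrow> sqf_monomial P \<in> Y \<Longrightarrow> thesis"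
      have fin: "finite S" using S finite_subset by blast
      have e: "sqf_monomial (insert 1 (insert m S)) = (pvar 1 * pvar m * sqf_monomial S :: 'k mpoly)"
        using sqf_ends[OF fin, of m, where 'k='k] m3 sub32[of S m] S(1) by auto
      show thesis by (rule th[of "insert 1 (insert m S)"]) (use S e in \<open>auto simp: Y_def gens_I_def gap2_def\<close>)
    qed
    have "sqf_monomial P \<in> I" using P that by blast
    moreover have "sqf_monomial (W - P) \<in> carrier R" unfolding R_def by (rule sqf_carrier) (use W in auto)
    ultimately have "sqf_monomial P \<otimes>\<^bsub>R\<^esub> sqf_monomial (W - P) \<in> I"
      using ideal.I_r_closed[OF that(1)] by blast
    then show "x \<in> I" using W sqf_split[OF fW P(1), where 'k='k] by (simp add: R_def poly_ring_m_def)
  qed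
  have eq: "stanley_reisner_ideal m \<Delta> = genideal R Y"
    unfolding stanley_reisner_ideal_def genideal_def R_def[symmetric] X_def[symmetric]
    using XY YX by (intro arg_cong[where f=Inter]) blast
  show ?thesis unfolding kalg_iso_quot_def Y_def[symmetric] R_def[symmetric] eq
    by (rule bexI[of _ id]) (auto simp: ring_iso_def ring_hom_def)
qed


lemma gap2_mono: "gap2 S \<Longrightarrow> T \<subseteq> S \<Longrightarrow> gap2 T"
  unfolding gap2_def by blast

lemma gap_disj: "gap2 S \<Longrightarrow> S \<inter> Suc ` S = {}"
  unfolding gap2_def by force

lemma card_SS: "finite S \<Longrightarrow> gap2 S \<Longrightarrow> card (S \<union> Suc ` S) = 2 * card S"
  using gap_disj[of S] by (simp add: card_Un_disjoint card_image)

lemma above_SS: "(k::nat) \<notin> S \<Longrightarrow> {l\<in>S \<union> Suc ` S. k < l} = {s\<in>S. k < s} \<union> Suc ` {s\<in>S. k < s}"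
  by (auto simp: image_iff less_Suc_eq)

lemma even_above: "finite S \<Longrightarrow> gap2 S \<Longrightarrow> (k::nat) \<notin> S \<Longrightarrow> even (card {l\<in>S \<union> Suc ` S. k < l})"
  unfolding above_SS
  by (subst card_SS) (auto intro: gap2_mono)

lemma combA:
  assumes "forb a m W" "2 \<le> a" "2 * a + 1 \<le> m"
  shows "\<exists>K \<epsilon>. K \<subseteq> {1..m} \<and> card K = 2 * a + 1 \<and> (\<epsilon> = 1 \<or> \<epsilon> = -1) \<and>
      (\<forall>k\<in>K-W. \<epsilon> * (-1) ^ card {l\<in>K. k < l} = (1::real))"
  using assms(1) unfolding forb_def
proof (elim disjE exE conjE)
  fix S assume S: "S \<subseteq> W \<inter> {2..m-1}" "card S = a" "gap2 S"
  have fin: "finite S" using S(1) finite_subset by blast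
  have ne: "S \<noteq> {}" using S(2) assms(2) by auto
  define \<mu> where "\<mu> = Min S"
  have mu: "\<mu> \<in> S" "\<And>s. s \<in> S \<Longrightarrow> \<mu> \<le> s" using fin ne unfolding \<mu>_def by auto
  have Sr: "2 \<le> s \<and> s \<le> m - 1" if "s \<in> S" for s using S(1) that by auto
  define K where "K = insert (\<mu> - 1) (S \<union> Suc ` S)"
  have nin: "\<mu> - 1 \<notin> S \<union> Suc ` S" using mu Sr[of \<mu>] by force
  show ?thesis
  proof (intro exI conjI ballI)
    show "K \<subseteq> {1..m}" unfolding K_def using Sr mu by force
    show "card K = 2 * a + 1" unfolding K_def using nin card_SS[OF fin S(3)] fin S(2) by simp
    show "(1::real) = 1 \<or> (1::real) = -1" by simp
    fix k assume k: "k \<in> K - W"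
    then have kS: "k \<notin> S" using S(1) by auto
    have "\<mu> - 1 \<le> k" using k mu unfolding K_def by force
    then have "{l\<in>K. k < l} = {l\<in>S \<union> Suc ` S. k < l}" unfolding K_def by auto
    then show "1 * (-1) ^ card {l\<in>K. k < l} = (1::real)"
      using even_above[OF fin S(3) kS] by simp
  qed
next
  fix S assume S: "S \<subseteq> W \<inter> {3..m-2}" "card S = a - 1" "gap2 S" and W1: "1 \<in> W" "m \<in> W"
  have fin: "finite S" using S(1) finite_subset by blast
  have Sr: "3 \<le> s \<and> s \<le> m - 2" if "s \<in> S" for s using S(1) that by auto
  define K where "K = {1, 2, m} \<union> (S \<union> Suc ` S)"
  have nin: "1 \<notin> S \<union> Suc ` S" "2 \<notin> S \<union> Suc ` S" "m \<notin> S \<union> Suc ` S" using Sr by force+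
  show ?thesis
  proof (intro exI conjI ballI)
    show "K \<subseteq> {1..m}"
    proof
      fix x assume "x \<in> K"
      then show "x \<in> {1..m}" unfolding K_def using assms(2,3) by (auto dest: Sr)
    qed
    have "card {1, 2, m} = 3" using assms by auto
    then show "card K = 2 * a + 1" unfolding K_def using nin card_SS[OF fin S(3)] fin S(2) assms(2)
      by (subst card_Un_disjoint) auto
    show "(-1::real) = 1 \<or> (-1::real) = -1" by simp
    fix k assume k: "k \<in> K - W"
    then have kS: "k \<notin> S" using S(1) by auto
    have "k \<le> m" using k \<open>K \<subseteq> {1..m}\<close> by auto
    moreover have "k \<noteq> m" using k W1 by auto
    moreover have "k \<noteq> 1" using k W1 by auto
    moreover have "1 \<le> k" using k \<open>K \<subseteq> {1..m}\<close> by auto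
    ultimately have k2: "2 \<le> k" "k < m" by auto
    then have "{l\<in>K. k < l} = insert m {l\<in>S \<union> Suc ` S. k < l}" unfolding K_def by auto
    moreover have "m \<notin> {l\<in>S \<union> Suc ` S. k < l}" using nin by auto
    ultimately have "card {l\<in>K. k < l} = Suc (card {l\<in>S \<union> Suc ` S. k < l})" using fin by simp
    then show "-1 * (-1) ^ card {l\<in>K. k < l} = (1::real)"
      using even_above[OF fin S(3) kS] by simp
  qed
qed


fun par :: "nat set \<Rightarrow> nat \<Rightarrow> bool" where
  "par X 0 = False"
| "par X (Suc i) = (Suc i \<in> X \<and> \<not> par X i)"

lemma par_in: "par X i \<Longrightarrow> i \<in> X"
  by (cases i) auto

lemma gap2_par: "gap2 {i. par X i}"
  unfolding gap2_def
proof (intro ballI impI)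
  fix x y assume "x \<in> {i. par X i}" "y \<in> {i. par X i}" "x < y"
  then have "y \<noteq> Suc x" by auto
  then show "x + 2 \<le> y" using \<open>x < y\<close> by simp
qed

lemma card_int_Suc: "j \<le> n \<Longrightarrow> card (A \<inter> {j<..Suc n}) = card (A \<inter> {j<..n}) + (if Suc n \<in> A then 1 else 0)"
proof -
  assume "j \<le> n"
  then have "A \<inter> {j<..Suc n} = (if Suc n \<in> A then insert (Suc n) (A \<inter> {j<..n}) else A \<inter> {j<..n})"
    by (auto simp: le_Suc_eq)
  then show ?thesis by simp
qed

lemma par_count:
  assumes "j \<notin> X"
  shows "int (card (X \<inter> {j<..j+k})) + int (card ({i. par X i \<and> Suc i \<notin> X} \<inter> {j<..j+k}))
     = 2 * int (card ({i. par X i} \<inter> {j<..j+k})) - (if par X (j+k) \<and> Suc (j+k) \<in> X then 1 else 0)"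
proof (induction k)
  case 0
  have "\<not> par X j" using assms par_in by blast
  then show ?case by simp
next
  case (Suc k)
  have le: "j \<le> j + k" by simp
  show ?case
    unfolding add_Suc_right card_int_Suc[OF le] using Suc.IH
    by (cases "par X (j+k)"; cases "Suc (j+k) \<in> X"; cases "Suc (Suc (j+k)) \<in> X") auto
qed

lemma par_count_nat:
  assumes "j \<notin> X" "j' \<notin> X" "j < j'"
  shows "card (X \<inter> {j<..<j'}) + card ({i. par X i \<and> Suc i \<notin> X} \<inter> {j<..<j'})
     = 2 * card ({i. par X i} \<inter> {j<..<j'})"
proof -
  define k where "k = j' - 1 - j"
  have jk: "j + k = j' - 1" "Suc (j + k) = j'" using assms(3) unfolding k_def by auto
  have iv: "{j<..j+k} = {j<..<j'}" using jk by auto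
  have "int (card (X \<inter> {j<..<j'})) + int (card ({i. par X i \<and> Suc i \<notin> X} \<inter> {j<..<j'}))
     = 2 * int (card ({i. par X i} \<inter> {j<..<j'}))"
    using par_count[OF assms(1), of k] assms(2) unfolding iv jk(2) by simp
  then show ?thesis by linarith
qed

lemma combB:
  assumes nf: "\<not> forb a m W" and W: "W \<subseteq> {1..m}" and a: "2 \<le> a" and m: "2 * a + 1 \<le> m"
  shows "\<exists>E \<epsilon> j0. E \<subseteq> W \<and> card W + card E \<le> 2 * a - 1 \<and> (\<epsilon> = 1 \<or> \<epsilon> = -1) \<and>
     j0 \<in> {1..m} \<and> j0 \<notin> W \<and>
     (\<forall>j\<in>{1..m}-W. \<epsilon> * (-1) ^ (card {i\<in>W. j < i} + card {i\<in>E. j < i}) = (1::real))"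
proof -
  have finW: "finite W" using W finite_subset by blast
  have Wr: "1 \<le> x \<and> x \<le> m" if "x \<in> W" for x using W that by auto
  have Wne: "W \<noteq> {1..m}"
  proof
    assume Wa: "W = {1..m}"
    let ?S = "(\<lambda>i. 2 * i) ` {1..a}"
    have "?S \<subseteq> W \<inter> {2..m-1}" using m unfolding Wa by auto
    moreover have "card ?S = a" by (simp add: card_image inj_on_def)
    moreover have "gap2 ?S" unfolding gap2_def by auto
    ultimately show False using nf unfolding forb_def by blast
  qed
  then obtain j0 where j0: "j0 \<in> {1..m}" "j0 \<notin> W" using W by blast
  define X where "X = W \<inter> {2..m-1}"
  define G where "G = {i. par X i}"
  define Eg where "Eg = {i. par X i \<and> Suc i \<notin> X}"
  have XW: "X \<subseteq> W" unfolding X_def by auto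
  have finX: "finite X" using finW XW finite_subset by blast
  have GX: "G \<subseteq> X" unfolding G_def using par_in by blast
  have EgG: "Eg \<subseteq> G" unfolding Eg_def G_def by blast
  have finG: "finite G" using GX finX finite_subset by blast
  have finEg: "finite Eg" using EgG finG finite_subset by blast
  have gG: "gap2 G" unfolding G_def by (rule gap2_par)
  have cG: "card G \<le> a - 1"
  proof (rule ccontr)
    assume "\<not> card G \<le> a - 1"
    then have "a \<le> card G" by simp
    then obtain S where S: "S \<subseteq> G" "card S = a" by (meson obtain_subset_with_card_n)
    have "S \<subseteq> W \<inter> {2..m-1}" using S(1) GX unfolding X_def by blast
    moreover have "gap2 S" using gG S(1) by (rule gap2_mono)
    ultimately show False using nf S(2) unfolding forb_def by blast
  qed
  have Xr: "2 \<le> x \<and> x \<le> m - 1" if "x \<in> X" for x using that unfolding X_def by auto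
  have tot: "card X + card Eg = 2 * card G"
  proof -
    have "0 \<notin> X" "m + 1 \<notin> X" using Xr by force+
    from par_count_nat[OF this] m
    have "card (X \<inter> {0<..<m+1}) + card (Eg \<inter> {0<..<m+1}) = 2 * card (G \<inter> {0<..<m+1})"
      unfolding Eg_def G_def by simp
    moreover have "X \<inter> {0<..<m+1} = X" using Xr by force
    moreover have "Eg \<inter> {0<..<m+1} = Eg" using EgG GX Xr by force
    moreover have "G \<inter> {0<..<m+1} = G" using GX Xr by force
    ultimately show ?thesis by simp
  qed
  have cardW: "card W = card X + card (W - X)" using XW finW
    by (metis card_Diff_subset card_mono le_add_diff_inverse finite_subset)
  have WX: "W - X \<subseteq> {1, m}" unfolding X_def by (auto dest: Wr)
  have c2: "card {1::nat, m} \<le> 2" by (cases "m = 1") auto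
  have cWX: "card (W - X) \<le> 2" using card_mono[OF _ WX] c2 by simp
  have cWX1: "card (W - X) \<le> 1" if "\<not> (1 \<in> W \<and> m \<in> W)"
  proof -
    have "W - X \<subseteq> {1} \<or> W - X \<subseteq> {m}" using WX that by auto
    then show ?thesis using card_mono[of "{1}" "W - X"] card_mono[of "{m}" "W - X"] by auto
  qed
  have "\<exists>D. D \<subseteq> Eg \<and> card W + (card Eg - card D) \<le> 2 * a - 1 \<and>
           (\<forall>j\<in>{1..m}-W. \<forall>j'\<in>{1..m}-W. D \<inter> {j<..<j'} = {})"
  proof (cases "1 \<in> W \<and> m \<in> W")
    case False
    then show ?thesis using cWX1 cardW tot cG a by (intro exI[of _ "{}"]) auto
  next
    case True
    note ends = True
    show ?thesis
    proof (cases "card G \<le> a - 2")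
      case True
      then show ?thesis using cWX cardW tot a by (intro exI[of _ "{}"]) auto
    next
      case False
      then have cGa: "card G = a - 1" using cG by simp
      show ?thesis
      proof (cases "\<exists>e\<in>Eg. {1..e} \<subseteq> W")
        case True
        then obtain e where e: "e \<in> Eg" "{1..e} \<subseteq> W" by blast
        show ?thesis
        proof (intro exI[of _ "{e}"] conjI ballI)
          show "{e} \<subseteq> Eg" using e by simp
          show "card W + (card Eg - card {e}) \<le> 2 * a - 1" using cWX cardW tot cGa a e(1) finEg
            by (simp add: card_gt_0_iff) (use e(1) finEg card_0_eq in fastforce)
          fix j j' assume j: "j \<in> {1..m} - W" and "j' \<in> {1..m} - W"
          have "e < j"
          proof (rule ccontr)
            assume "\<not> e < j"
            then have "j \<in> {1..e}" using j by auto
            then show False using e(2) j by auto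
          qed
          then show "{e} \<inter> {j<..<j'} = {}" by auto
        qed
      next
        case noe: False
        show ?thesis
        proof (cases "m - 1 \<in> Eg")
          case True
          show ?thesis
          proof (intro exI[of _ "{m - 1}"] conjI ballI)
            show "{m - 1} \<subseteq> Eg" using True by simp
            show "card W + (card Eg - card {m - 1}) \<le> 2 * a - 1" using cWX cardW tot cGa a True finEg
              by (simp add: card_gt_0_iff) (use True finEg card_0_eq in fastforce)
            fix j j' assume "j \<in> {1..m} - W" and j': "j' \<in> {1..m} - W"
            then have "j' \<le> m - 1" using ends by (cases "j' = m") auto
            then show "{m - 1} \<inter> {j<..<j'} = {}" by auto
          qed
        next
          case nom: False
          define f where "f i = (if {1..i} \<subseteq> W then Suc i else i)" for i
          have Gr: "i \<in> X" "2 \<le> i" "i \<le> m - 1" "i \<in> W" "par X i" if "i \<in> G" for i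
            using that GX Xr XW unfolding G_def by auto
          have fG: "f i \<in> W \<and> 3 \<le> f i \<and> f i \<le> m - 2" if i: "i \<in> G" for i
          proof (cases "{1..i} \<subseteq> W")
            case True
            then have "i \<notin> Eg" using noe by blast
            then have si: "Suc i \<in> X" using Gr(5)[OF i] unfolding Eg_def by blast
            have "Suc i \<noteq> m - 1"
            proof
              assume sm1: "Suc i = m - 1"
              have "{1..m} \<subseteq> W"
              proof
                fix x assume x: "x \<in> {1..m}"
                consider "x \<le> i" | "x = Suc i" | "x = m" using x sm1 by force
                then show "x \<in> W"
                proof cases
                  case 1 then show ?thesis using True x by auto
                next
                  case 2 then show ?thesis using si XW by auto
                next
                  case 3 then show ?thesis using ends by auto
                qed
              qed
              then show False using Wne W by blast
            qed
            then show ?thesis using True si XW Xr[OF si] Gr[OF i] unfolding f_def by auto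
          next
            case False
            have "i \<noteq> 2"
            proof
              assume "i = 2"
              then have "{1..i} \<subseteq> W" using ends Gr(4)[OF i] by (auto simp: le_Suc_eq numeral_2_eq_2)
              then show False using False by blast
            qed
            moreover have "i \<noteq> m - 1"
            proof
              assume im: "i = m - 1"
              have "Suc i \<notin> X" using Xr im Gr(2)[OF i] by force
              then have "i \<in> Eg" using Gr(5)[OF i] unfolding Eg_def by blast
              then show False using nom im by simp
            qed
            ultimately show ?thesis using False Gr[OF i] unfolding f_def by auto
          qed
          have fmono: "f i + 2 \<le> f i'" if i: "i \<in> G" "i' \<in> G" "i < i'" for i i'
          proof -
            have ii: "i + 2 \<le> i'" using gG i unfolding gap2_def by blast
            show ?thesis
            proof (cases "{1..i} \<subseteq> W")
              case False
              then show ?thesis using ii unfolding f_def by auto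
            next
              case True
              then have "i \<notin> Eg" using noe i(1) by blast
              then have si: "Suc i \<in> X" using Gr(5)[OF i(1)] unfolding Eg_def by blast
              show ?thesis
              proof (cases "{1..i'} \<subseteq> W")
                case True then show ?thesis using ii unfolding f_def by auto
              next
                case False
                have "i' \<noteq> i + 2"
                proof
                  assume ie: "i' = i + 2"
                  have "{1..i'} \<subseteq> W"
                  proof
                    fix x assume "x \<in> {1..i'}"
                    then have "x \<in> {1..i} \<or> x = Suc i \<or> x = i'" using ie by auto
                    then show "x \<in> W" using \<open>{1..i} \<subseteq> W\<close> si XW Gr(4)[OF i(2)] by blast
                  qed
                  then show False using False by blast
                qed
                then show ?thesis using ii \<open>{1..i} \<subseteq> W\<close> False unfolding f_def by auto
              qed
            qed
          qed
          have injf: "inj_on f G"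
          proof (rule inj_onI)
            fix x y assume xy: "x \<in> G" "y \<in> G" "f x = f y"
            show "x = y"
            proof (rule ccontr)
              assume "x \<noteq> y"
              then have "x < y \<or> y < x" by auto
              then show False using fmono[of x y] fmono[of y x] xy by auto
            qed
          qed
          have "f ` G \<subseteq> W \<inter> {3..m-2}" using fG by auto
          moreover have "card (f ` G) = a - 1" using card_image[OF injf] cGa by simp
          moreover have "gap2 (f ` G)" unfolding gap2_def
          proof (intro ballI impI)
            fix x y assume "x \<in> f ` G" "y \<in> f ` G" "x < y"
            then obtain i i' where ii: "i \<in> G" "i' \<in> G" "x = f i" "y = f i'" by blast
            then have "i \<noteq> i'" using \<open>x < y\<close> by auto
            then have "i < i' \<or> i' < i" by auto
            then show "x + 2 \<le> y" using fmono[of i i'] fmono[of i' i] ii \<open>x < y\<close> by auto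
          qed
          ultimately have "forb a m W" unfolding forb_def using ends by blast
          then show ?thesis using nf by blast
        qed
      qed
    qed
  qed
  then obtain D where D: "D \<subseteq> Eg" "card W + (card Eg - card D) \<le> 2 * a - 1"
    "\<And>j j'. j \<in> {1..m}-W \<Longrightarrow> j' \<in> {1..m}-W \<Longrightarrow> D \<inter> {j<..<j'} = {}" by blast
  define E where "E = Eg - D"
  have EW: "E \<subseteq> W" unfolding E_def using EgG GX XW by blast
  have cE: "card E = card Eg - card D" unfolding E_def using D(1) finEg
    by (simp add: card_Diff_subset finite_subset)
  define N where "N j = card {i\<in>W. j < i} + card {i\<in>E. j < i}" for j
  have step: "even (N j + N j')" if j: "j \<in> {1..m}-W" "j' \<in> {1..m}-W" "j < j'" for j j'
  proof -
    have jX: "j \<notin> X" "j' \<notin> X" using j XW by auto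
    have inX: "i \<in> X" if i: "i \<in> W" "j < i" "\<not> j' < i" for i
    proof -
      have "i \<noteq> j'" using i j by auto
      then have "i < j'" using i by simp
      moreover have "1 \<le> j" "j' \<le> m" using j by auto
      ultimately show ?thesis using i unfolding X_def by auto
    qed
    have s1: "{i\<in>W. j < i} = {i\<in>W. j' < i} \<union> (X \<inter> {j<..<j'})"
    proof (rule Set.set_eqI)
      fix i show "i \<in> {i\<in>W. j < i} \<longleftrightarrow> i \<in> {i\<in>W. j' < i} \<union> (X \<inter> {j<..<j'})"
        using inX[of i] j(2,3) XW by (cases "j' < i"; cases "i = j'") auto
    qed
    have inEg: "i \<in> E" if i: "i \<in> Eg" "j < i" "i < j'" for i
      using D(3)[OF j(1,2)] i unfolding E_def by auto
    have s2: "{i\<in>E. j < i} = {i\<in>E. j' < i} \<union> (Eg \<inter> {j<..<j'})"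
    proof (rule Set.set_eqI)
      fix i show "i \<in> {i\<in>E. j < i} \<longleftrightarrow> i \<in> {i\<in>E. j' < i} \<union> (Eg \<inter> {j<..<j'})"
        using inEg[of i] inX[of i] EW j(3) j(2) unfolding E_def by (cases "j' < i"; cases "i = j'") auto
    qed
    have finE: "finite E" using EW finW finite_subset by blast
    have c1: "card {i\<in>W. j < i} = card {i\<in>W. j' < i} + card (X \<inter> {j<..<j'})"
      unfolding s1 by (rule card_Un_disjoint) (use finW finX in auto)
    have c2: "card {i\<in>E. j < i} = card {i\<in>E. j' < i} + card (Eg \<inter> {j<..<j'})"
      unfolding s2 by (rule card_Un_disjoint) (use finE finEg in auto)
    have "N j = N j' + (card (X \<inter> {j<..<j'}) + card (Eg \<inter> {j<..<j'}))"
      unfolding N_def c1 c2 by simp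
    then show ?thesis using par_count_nat[OF jX j(3)] unfolding Eg_def G_def by simp
  qed
  have ev: "even (N j + N j')" if j: "j \<in> {1..m}-W" "j' \<in> {1..m}-W" for j j'
  proof -
    consider "j < j'" | "j = j'" | "j' < j" by linarith
    then show ?thesis
    proof cases
      case 1 then show ?thesis using step[OF j 1] by blast
    next
      case 2 then show ?thesis by simp
    next
      case 3 then have "even (N j' + N j)" using step[OF j(2) j(1) 3] by blast
      then show ?thesis by (simp add: add.commute)
    qed
  qed
  have j0': "j0 \<in> {1..m} - W" using j0 by blast
  show ?thesis
  proof (rule exI[of _ E], rule exI[of _ "(-1::real) ^ N j0"], rule exI[of _ j0], intro conjI ballI)
    show "E \<subseteq> W" by (rule EW)
    show "card W + card E \<le> 2 * a - 1" using D(2) cE by simp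
    show "(-1::real) ^ N j0 = 1 \<or> (-1::real) ^ N j0 = -1" by (cases "even (N j0)") auto
    show "j0 \<in> {1..m}" "j0 \<notin> W" using j0 by auto
    fix j assume jj: "j \<in> {1..m} - W"
    have "even (N j0 + N j)" by (rule ev[OF j0' jj])
    then have "(-1::real) ^ (N j0 + N j) = 1" by simp
    then show "(-1::real) ^ N j0 * (-1) ^ (card {i\<in>W. j < i} + card {i\<in>E. j < i}) = 1"
      unfolding N_def power_add by simp
  qed
qed



definition DD :: "real set \<Rightarrow> (real \<Rightarrow> real) \<Rightarrow> real" where
  "DD S f = (\<Sum>k\<in>S. f k / (\<Prod>l\<in>S-{k}. (k - l)))"

lemma DD_shift:
  assumes "finite S" "a \<in> S"
  shows "DD S (\<lambda>x. (x - a) * f x) = DD (S - {a}) f"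
proof -
  have "DD S (\<lambda>x. (x - a) * f x) = (\<Sum>k\<in>S-{a}. (k - a) * f k / (\<Prod>l\<in>S-{k}. (k - l)))"
    unfolding DD_def by (subst sum.remove[OF assms]) simp
  also have "\<dots> = (\<Sum>k\<in>S-{a}. f k / (\<Prod>l\<in>(S-{a})-{k}. (k - l)))"
  proof (rule sum.cong[OF refl])
    fix k assume k: "k \<in> S - {a}"
    have "(\<Prod>l\<in>S-{k}. (k - l)) = (k - a) * (\<Prod>l\<in>(S-{k})-{a}. (k - l))"
      using assms k by (subst prod.remove[of _ a]) auto
    moreover have "(S-{k})-{a} = (S-{a})-{k}" by auto
    moreover have "k - a \<noteq> 0" using k by auto
    ultimately show "(k - a) * f k / (\<Prod>l\<in>S-{k}. (k - l)) = f k / (\<Prod>l\<in>(S-{a})-{k}. (k - l))"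
      by simp
  qed
  finally show ?thesis unfolding DD_def .
qed

lemma DD_add: "DD S (\<lambda>x. f x + g x) = DD S f + DD S g"
  unfolding DD_def by (simp add: add_divide_distrib sum.distrib)

lemma DD_diff: "DD S (\<lambda>x. f x - g x) = DD S f - DD S g"
  unfolding DD_def by (simp add: diff_divide_distrib sum_subtractf)

lemma DD_cmult: "DD S (\<lambda>x. c * f x) = c * DD S f"
  unfolding DD_def by (simp add: sum_distrib_left)

lemma DD_single: "DD {b} f = f b"
  unfolding DD_def by simp

lemma DD_one: "finite S \<Longrightarrow> 2 \<le> card S \<Longrightarrow> DD S (\<lambda>_. 1) = 0"
proof (induction "card S" arbitrary: S rule: less_induct)
  case less
  obtain a where a: "a \<in> S" using less.prems by fastforce
  have "S - {a} \<noteq> {}"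
  proof
    assume "S - {a} = {}"
    then have "S \<subseteq> {a}" by auto
    then have "card S \<le> 1" using card_mono[of "{a}" S] by simp
    then show False using less.prems by simp
  qed
  then obtain b where b: "b \<in> S - {a}" by blast
  have fin: "finite S" using less.prems by simp
  have bS: "b \<in> S" using b by simp
  have e1: "DD S (\<lambda>x. (x - a) * 1) = DD (S-{a}) (\<lambda>_. 1)" by (rule DD_shift[OF fin a])
  have e2: "DD S (\<lambda>x. (x - b) * 1) = DD (S-{b}) (\<lambda>_. 1)" by (rule DD_shift[OF fin bS])
  have e3: "DD S (\<lambda>x. (x-a)*1 - (x-b)*1) = DD S (\<lambda>x. (x-a)*1) - DD S (\<lambda>x.(x-b)*1)" by (rule DD_diff)
  have e4: "(\<lambda>x::real. (x-a)*1 - (x-b)*1) = (\<lambda>x. (b-a) * 1)" by (simp add: algebra_simps)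
  have e5: "DD S (\<lambda>x. (b-a)*1) = (b-a) * DD S (\<lambda>_. 1)" by (rule DD_cmult)
  have z: "DD (S - {a}) (\<lambda>_. 1) - DD (S - {b}) (\<lambda>_. 1) = 0"
  proof (cases "card S = 2")
    case True
    have c1: "card (S - {a}) = 1" "card (S - {b}) = 1" using True a bS fin by auto
    have aS: "a \<in> S - {b}" using a b by auto
    have "S - {a} = {b}" using c1(1) b by (metis card_1_singletonE singletonD)
    moreover have "S - {b} = {a}" using c1(2) aS by (metis card_1_singletonE singletonD)
    ultimately show ?thesis by (simp add: DD_single)
  next
    case False
    then have c: "2 \<le> card (S - {a})" "2 \<le> card (S - {b})" using less.prems a bS by auto
    have "card (S - {a}) < card S" "card (S - {b}) < card S" using fin a bS less.prems(2)
      by auto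
    then show ?thesis using less.hyps c fin by simp
  qed
  have "(b - a) * DD S (\<lambda>_. 1) = 0" using e1 e2 e3 e4 e5 z by simp
  moreover have "b \<noteq> a" using b by auto
  ultimately show ?case by simp
qed

lemma DD_pow: "finite S \<Longrightarrow> e + 2 \<le> card S \<Longrightarrow> DD S (\<lambda>x. x ^ e) = 0"
proof (induction e arbitrary: S)
  case 0 then show ?case using DD_one by simp
next
  case (Suc e)
  obtain a where a: "a \<in> S" using Suc.prems by fastforce
  have "DD S (\<lambda>x. x ^ Suc e) = DD S (\<lambda>x. (x - a) * x ^ e + a * x ^ e)"
    by (rule arg_cong[where f="DD S"]) (auto simp: algebra_simps)
  also have "\<dots> = DD (S - {a}) (\<lambda>x. x ^ e) + a * DD S (\<lambda>x. x ^ e)"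
    using DD_add DD_shift[OF Suc.prems(1) a] DD_cmult by simp
  also have "\<dots> = 0" using Suc.IH Suc.prems a by simp
  finally show ?case .
qed

definition pf :: "nat \<Rightarrow> (real \<Rightarrow> real) \<Rightarrow> bool" where
  "pf d f \<longleftrightarrow> (\<exists>c. \<forall>x. f x = (\<Sum>e\<le>d. c e * x ^ e))"

lemma DD_pf: assumes "finite S" "d + 2 \<le> card S" "pf d f" shows "DD S f = 0"
proof -
  obtain c where c: "\<And>x. f x = (\<Sum>e\<le>d. c e * x ^ e)" using assms(3) pf_def by blast
  have "DD S f = (\<Sum>k\<in>S. \<Sum>e\<le>d. c e * (k ^ e / (\<Prod>l\<in>S-{k}. (k - l))))"
    unfolding DD_def c by (simp add: sum_divide_distrib)
  also have "\<dots> = (\<Sum>e\<le>d. c e * DD S (\<lambda>x. x ^ e))"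
    unfolding DD_def by (subst sum.swap) (simp add: sum_distrib_left)
  also have "\<dots> = 0" using DD_pow[OF assms(1)] assms(2) by simp
  finally show ?thesis .
qed

lemma pf_cmult: "pf d f \<Longrightarrow> pf d (\<lambda>x. c * f x)"
proof -
  assume "pf d f"
  then obtain b where b: "\<And>x. f x = (\<Sum>e\<le>d. b e * x ^ e)" unfolding pf_def by blast
  show ?thesis unfolding pf_def
    by (rule exI[of _ "\<lambda>e. c * b e"]) (simp add: b sum_distrib_left mult.assoc)
qed

lemma pf_neg: "pf d f \<Longrightarrow> pf d (\<lambda>x. - f x)"
  using pf_cmult[of d f "-1"] by simp


lemma prod_sign:
  fixes S :: "real set"
  assumes "finite S" "y \<notin> S"
  shows "0 < (-1) ^ card {l\<in>S. y < l} * (\<Prod>l\<in>S. (y - l))"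
  using assms
proof (induction S rule: finite_induct)
  case empty then show ?case by simp
next
  case (insert x F)
  have pos: "0 < (-1) ^ card {l\<in>F. y < l} * (\<Prod>l\<in>F. (y - l))" using insert.IH insert.prems by simp
  have fin: "finite {l\<in>F. y < l}" using insert by simp
  show ?case
  proof (cases "y < x")
    case True
    have "{l\<in>insert x F. y < l} = insert x {l\<in>F. y < l}" using True by auto
    then have c: "card {l\<in>insert x F. y < l} = Suc (card {l\<in>F. y < l})" using insert fin by simp
    have p: "(\<Prod>l\<in>insert x F. (y - l)) = (y - x) * (\<Prod>l\<in>F. (y - l))" using insert by simp
    have e: "(-1) ^ card {l\<in>insert x F. y < l} * (\<Prod>l\<in>insert x F. (y - l))
       = (x - y) * ((-1) ^ card {l\<in>F. y < l} * (\<Prod>l\<in>F. (y - l)))" unfolding c p by (simp add: algebra_simps)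
    show ?thesis unfolding e using pos True by simp
  next
    case False
    then have "y > x" using insert by auto
    have c: "{l\<in>insert x F. y < l} = {l\<in>F. y < l}" using False by auto
    have p: "(\<Prod>l\<in>insert x F. (y - l)) = (y - x) * (\<Prod>l\<in>F. (y - l))" using insert by simp
    have e: "(-1) ^ card {l\<in>insert x F. y < l} * (\<Prod>l\<in>insert x F. (y - l))
       = (y - x) * ((-1) ^ card {l\<in>F. y < l} * (\<Prod>l\<in>F. (y - l)))" unfolding c p by (simp add: algebra_simps)
    show ?thesis unfolding e using pos \<open>y > x\<close> by simp
  qed
qed

lemma prod_nz: "finite S \<Longrightarrow> k \<in> S \<Longrightarrow> (\<Prod>l\<in>S-{k}. ((k::real) - l)) \<noteq> 0"
  by (simp)

lemma alt_zero:
  assumes "finite S" "card S = d + 2" "pf d f"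
    and alt: "\<And>k. k \<in> S \<Longrightarrow> 0 \<le> (-1) ^ card {l\<in>S. k < l} * f k"
    and "k \<in> S"
  shows "f k = 0"
proof -
  let ?P = "\<lambda>k. (\<Prod>l\<in>S-{k}. (k - l))"
  let ?s = "\<lambda>k. (-1::real) ^ card {l\<in>S. k < l}"
  have nn: "0 \<le> f k / ?P k" if "k \<in> S" for k
  proof -
    have "{l\<in>S. k < l} = {l\<in>S-{k}. k < l}" by auto
    then have pos: "0 < ?s k * ?P k" using prod_sign[of "S - {k}" k] assms(1) by simp
    have "?s k \<noteq> 0" by simp
    then have eq: "f k / ?P k = (?s k * f k) / (?s k * ?P k)"
      by (rule mult_divide_mult_cancel_left[symmetric])
    show ?thesis by (subst eq) (rule divide_nonneg_pos[OF alt[OF that] pos])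
  qed
  have "DD S f = 0" by (rule DD_pf) (use assms in auto)
  then have "(\<Sum>k\<in>S. f k / ?P k) = 0" unfolding DD_def .
  then have "\<forall>k\<in>S. f k / ?P k = 0" using sum_nonneg_eq_0_iff[OF assms(1), of "\<lambda>k. f k / ?P k"] nn by simp
  then have "f k / ?P k = 0" using assms(5) by blast
  then show ?thesis using prod_nz[OF assms(1) assms(5)] by simp
qed

lemma ext_zero:
  assumes "finite S" "card S = d + 2" "pf d f" "y \<in> S" "\<And>k. k \<in> S - {y} \<Longrightarrow> f k = 0"
  shows "f y = 0"
proof -
  have "DD S f = 0" by (rule DD_pf) (use assms in auto)
  moreover have "DD S f = f y / (\<Prod>l\<in>S-{y}. (y - l)) + (\<Sum>k\<in>S-{y}. f k / (\<Prod>l\<in>S-{k}. (k - l)))"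
    unfolding DD_def by (rule sum.remove[OF assms(1,4)])
  moreover have "(\<Sum>k\<in>S-{y}. f k / (\<Prod>l\<in>S-{k}. (k - l))) = 0" using assms(5) by simp
  ultimately show ?thesis using prod_nz[OF assms(1,4)] by simp
qed

lemma card_above_img:
  fixes t :: "nat \<Rightarrow> real"
  assumes "strict_mono_on {1..m} t" "K \<subseteq> {1..m}" "k \<in> {1..m}"
  shows "card {l\<in>t`K. t k < l} = card {l\<in>K. k < l}"
proof -
  have inj: "inj_on t K" using strict_mono_on_imp_inj_on[OF assms(1)] assms(2) inj_on_subset by blast
  have "{l\<in>t`K. t k < l} = t ` {l\<in>K. k < l}"
  proof safe
    fix l assume "l \<in> K" "t k < t l"
    then have "k < l" using assms strict_mono_on_leD[OF assms(1), of l k] by (force simp: not_less)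
    then show "t l \<in> t ` {l \<in> K. k < l}" using \<open>l \<in> K\<close> by auto
  next
    fix l assume "l \<in> K" "k < l"
    then have "l \<in> {1..m}" using assms(2) by blast
    then show "t k < t l" using strict_mono_onD[OF assms(1) assms(3)] \<open>k < l\<close> by blast
  qed auto
  then show ?thesis using inj by (simp add: card_image inj_on_subset)
qed

lemma alt_zero_idx:
  fixes t :: "nat \<Rightarrow> real"
  assumes "strict_mono_on {1..m} t" "K \<subseteq> {1..m}" "card K = d + 2" "pf d f"
    and alt: "\<And>k. k \<in> K \<Longrightarrow> 0 \<le> (-1) ^ card {l\<in>K. k < l} * f (t k)"
    and "k \<in> K"
  shows "f (t k) = 0"
proof -
  have inj: "inj_on t K" using strict_mono_on_imp_inj_on[OF assms(1)] assms(2) inj_on_subset by blast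
  have fin: "finite K" using assms(2) finite_subset by blast
  show ?thesis
  proof (rule alt_zero[of "t`K" d f])
    show "card (t ` K) = d + 2" using inj assms(3) by (simp add: card_image)
    fix x assume "x \<in> t ` K"
    then obtain k' where k': "k' \<in> K" "x = t k'" by blast
    then show "0 \<le> (-1) ^ card {l\<in>t`K. x < l} * f x"
      using alt[OF k'(1)] card_above_img[OF assms(1,2), of k'] assms(2) by auto
  qed (use fin assms in auto)
qed

lemma ext_zero_idx:
  fixes t :: "nat \<Rightarrow> real"
  assumes "strict_mono_on {1..m} t" "K \<subseteq> {1..m}" "card K = d + 2" "pf d f" "y \<in> K"
    "\<And>k. k \<in> K - {y} \<Longrightarrow> f (t k) = 0"
  shows "f (t y) = 0"
proof -
  have inj: "inj_on t K" using strict_mono_on_imp_inj_on[OF assms(1)] assms(2) inj_on_subset by blast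
  have fin: "finite K" using assms(2) finite_subset by blast
  show ?thesis
  proof (rule ext_zero[of "t`K" d f])
    show "card (t ` K) = d + 2" using inj assms(3) by (simp add: card_image)
    fix x assume "x \<in> t ` K - {t y}"
    then obtain k' where k': "k' \<in> K" "x = t k'" "k' \<noteq> y" by blast
    then show "f x = 0" using assms(6) by auto
  qed (use fin assms in auto)
qed

lemma prod_sign_idx:
  fixes t :: "nat \<Rightarrow> real"
  assumes "strict_mono_on {1..m} t" "A \<subseteq> {1..m}" "j \<in> {1..m}" "j \<notin> A"
  shows "0 < (-1) ^ card {i\<in>A. j < i} * (\<Prod>i\<in>A. (t j - t i))"
proof -
  have "insert j A \<subseteq> {1..m}" using assms(2,3) by blast
  then have inj: "inj_on t (insert j A)" using strict_mono_on_imp_inj_on[OF assms(1)] inj_on_subset by blast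
  have fin: "finite A" using assms(2) finite_subset by blast
  have "(\<Prod>i\<in>A. (t j - t i)) = (\<Prod>l\<in>t`A. (t j - l))"
    using inj by (subst prod.reindex) (auto intro: inj_on_subset)
  moreover have "card {i\<in>A. j < i} = card {l\<in>t`A. t j < l}"
    using card_above_img[OF assms(1,2,3)] by simp
  moreover have "t j \<notin> t ` A" using inj assms(4) by (auto simp: inj_on_def)
  ultimately show ?thesis using prod_sign[of "t`A" "t j"] fin by simp
qed



lemma ci_bij: "bij_betw (coord_index :: 'n::finite \<Rightarrow> nat) UNIV {1..CARD('n)}"
proof -
  have "\<exists>r. bij_betw r (UNIV::'n set) {1..CARD('n)}"
    by (rule finite_same_card_bij) auto
  then show ?thesis unfolding coord_index_def by (rule someI_ex)
qed

lemma moment_inner: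
  "h \<bullet> (moment s :: real^'n::finite) = (\<Sum>e\<in>{1..CARD('n)}. h $ (inv_into UNIV coord_index e) * s ^ e)"
proof -
  have bij: "bij_betw (coord_index :: 'n \<Rightarrow> nat) UNIV {1..CARD('n)}" by (rule ci_bij)
  have inj: "inj (coord_index :: 'n \<Rightarrow> nat)" using bij by (simp add: bij_betw_def)
  have "h \<bullet> (moment s :: real^'n) = (\<Sum>j\<in>UNIV. h $ j * s ^ coord_index j)"
    unfolding inner_vec_def moment_def by simp
  also have "\<dots> = (\<Sum>j\<in>UNIV. (\<lambda>e. h $ (inv_into UNIV coord_index e) * s ^ e) (coord_index (j::'n)))"
  proof (rule sum.cong[OF refl])
    fix j :: 'n
    have "inv_into UNIV coord_index (coord_index j) = j" by (rule inv_into_f_f[OF inj]) simp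
    then show "h $ j * s ^ coord_index j = (\<lambda>e. h $ (inv_into UNIV coord_index e) * s ^ e) (coord_index j)"
      by simp
  qed
  also have "\<dots> = (\<Sum>e\<in>{1..CARD('n)}. h $ (inv_into UNIV coord_index e) * s ^ e)"
    by (rule sum.reindex_bij_betw[OF bij])
  finally show ?thesis .
qed

lemma sum_atMost_split0: "(\<Sum>e\<le>d. g e) = g 0 + (\<Sum>e\<in>{1..d}. g (e::nat))"
proof -
  have "{..d} = insert 0 {1..d}" by auto
  then show ?thesis by simp
qed

lemma pf_hyper: "pf CARD('n) (\<lambda>s. b - h \<bullet> (moment s :: real^'n::finite))"
  unfolding pf_def
proof (rule exI[of _ "\<lambda>e. if e = 0 then b else - h $ (inv_into UNIV coord_index e)"], intro allI)
  fix s :: real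
  show "b - h \<bullet> (moment s :: real^'n) =
    (\<Sum>e\<le>CARD('n). (if e = 0 then b else - h $ (inv_into UNIV coord_index e)) * s ^ e)"
    unfolding sum_atMost_split0 moment_inner by (simp add: sum_negf)
qed

lemma hyper_of_poly: "\<exists>h b. \<forall>s. (\<Sum>e\<le>CARD('n). c e * s ^ e) = b - h \<bullet> (moment s :: real^'n::finite)"
proof (intro exI allI)
  fix s :: real
  let ?h = "(\<chi> j. - c (coord_index j)) :: real^'n"
  have bij: "bij_betw (coord_index :: 'n \<Rightarrow> nat) UNIV {1..CARD('n)}" by (rule ci_bij)
  have "?h \<bullet> moment s = (\<Sum>e\<in>{1..CARD('n)}. - c e * s ^ e)"
    unfolding moment_inner
  proof (rule sum.cong[OF refl])
    fix e assume "e \<in> {1..CARD('n)}"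
    then have "e \<in> range (coord_index :: 'n \<Rightarrow> nat)" using bij by (simp add: bij_betw_def)
    then show "?h $ (inv_into UNIV (coord_index :: 'n \<Rightarrow> nat) e) * s ^ e = - c e * s ^ e"
      by (simp add: f_inv_into_f)
  qed
  then show "(\<Sum>e\<le>CARD('n). c e * s ^ e) = c 0 - ?h \<bullet> (moment s :: real^'n)"
    unfolding sum_atMost_split0 by (simp add: sum_negf)
qed

lemma V_in_P: "i \<in> {1..m} \<Longrightarrow> (moment (t i) :: real^'n::finite) \<in> cyclic_polytope TYPE('n) t m"
  unfolding cyclic_polytope_def by (rule hull_inc) auto

lemma faceA:
  fixes t :: "nat \<Rightarrow> real"
  assumes d: "d = CARD('n::finite)" and sm: "strict_mono_on {1..m} t"
    and W: "W \<in> cyclic_boundary_complex TYPE('n) t m"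
    and K: "K \<subseteq> {1..m}" "card K = d + 2" "\<epsilon> = 1 \<or> \<epsilon> = -1"
      "\<And>k. k \<in> K - W \<Longrightarrow> \<epsilon> * (-1) ^ card {l\<in>K. k < l} = (1::real)"
  shows False
proof -
  define P where "P = cyclic_polytope TYPE('n) t m"
  have P: "P = convex hull ((\<lambda>i. moment (t i) :: real^'n) ` {1..m})" unfolding P_def cyclic_polytope_def by simp
  obtain F where F: "F face_of P" "F \<noteq> P" "W = {i\<in>{1..m}. (moment (t i) :: real^'n) \<in> F}"
    using W unfolding cyclic_boundary_complex_def P_def by blast
  have "polytope P" unfolding P polytope_def by auto
  then have "F exposed_face_of P" using exposed_face_of_polyhedron polytope_imp_polyhedron F(1) by blast
  then obtain h b where hb: "P \<subseteq> {x. h \<bullet> x \<le> b}" "F = P \<inter> {x. h \<bullet> x = b}"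
    unfolding exposed_face_of_def by blast
  define q where "q s = b - h \<bullet> (moment s :: real^'n)" for s
  have pfq: "pf d q" unfolding q_def d by (rule pf_hyper)
  have VP: "(moment (t i) :: real^'n) \<in> P" if "i \<in> {1..m}" for i unfolding P_def by (rule V_in_P[OF that])
  have qnn: "0 \<le> q (t i)" if "i \<in> {1..m}" for i using hb(1) VP[OF that] unfolding q_def by auto
  have qW: "q (t i) = 0" if "i \<in> W" for i using F(3) hb(2) that unfolding q_def by auto
  have "\<exists>i0\<in>{1..m}. 0 < q (t i0)"
  proof (rule ccontr)
    assume "\<not> (\<exists>i0\<in>{1..m}. 0 < q (t i0))"
    then have z: "q (t i) = 0" if "i \<in> {1..m}" for i using that qnn[OF that] by force
    have "(\<lambda>i. moment (t i) :: real^'n) ` {1..m} \<subseteq> F" using z hb(2) VP unfolding q_def by auto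
    moreover have "convex F" using F(1) face_of_imp_convex by blast
    ultimately have "P \<subseteq> F" unfolding P by (rule hull_minimal)
    then show False using F(1,2) face_of_imp_subset by blast
  qed
  then obtain i0 where i0: "i0 \<in> {1..m}" "0 < q (t i0)" by blast
  have zK: "q (t k) = 0" if "k \<in> K" for k
  proof -
    have "(\<lambda>s. \<epsilon> * q s) (t k) = 0"
    proof (rule alt_zero_idx[OF sm K(1) K(2) pf_cmult[OF pfq] _ that])
      fix k assume k: "k \<in> K"
      show "0 \<le> (-1) ^ card {l\<in>K. k < l} * (\<epsilon> * q (t k))"
      proof (cases "k \<in> W")
        case True then show ?thesis using qW by simp
      next
        case False
        then have "(-1) ^ card {l\<in>K. k < l} * (\<epsilon> * q (t k)) = (\<epsilon> * (-1) ^ card {l\<in>K. k < l}) * q (t k)"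
          by (simp add: algebra_simps)
        also have "\<dots> = q (t k)" using K(4)[of k] k False by simp
        finally have eq: "(-1) ^ card {l\<in>K. k < l} * (\<epsilon> * q (t k)) = q (t k)" .
        have kin: "k \<in> {1..m}" using K(1) k by blast
        show ?thesis unfolding eq by (rule qnn[OF kin])
      qed
    qed
    then show ?thesis using K(3) by auto
  qed
  have "i0 \<notin> K" using zK i0 by force
  have "K \<noteq> {}" using K(2) by auto
  then obtain k0 where k0: "k0 \<in> K" by blast
  let ?K = "insert i0 (K - {k0})"
  have finK: "finite K" using K(1) finite_subset by blast
  have cK: "card ?K = d + 2" using \<open>i0 \<notin> K\<close> k0 finK K(2) by (simp add: card_Diff_singleton)
  have sK: "?K \<subseteq> {1..m}" using K(1) i0 by auto
  have "q (t i0) = 0"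
    by (rule ext_zero_idx[OF sm sK cK pfq, of i0]) (use zK in auto)
  then show False using i0 by simp
qed

lemma sign_sq: "((-1::real) ^ n) * (-1) ^ n = 1"
  by (simp flip: power_add)

lemma faceB:
  fixes t :: "nat \<Rightarrow> real"
  assumes d: "d = CARD('n::finite)" and sm: "strict_mono_on {1..m} t"
    and W: "W \<subseteq> {1..m}" and E: "E \<subseteq> W" "card W + card E \<le> d" and eps: "\<epsilon> = 1 \<or> \<epsilon> = -1"
    and j0: "j0 \<in> {1..m}" "j0 \<notin> W"
    and par: "\<And>j. j \<in> {1..m} - W \<Longrightarrow> \<epsilon> * (-1) ^ (card {i\<in>W. j < i} + card {i\<in>E. j < i}) = (1::real)"
  shows "W \<in> cyclic_boundary_complex TYPE('n) t m"
proof -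
  have finW: "finite W" using W finite_subset by blast
  have finE: "finite E" using E finW finite_subset by blast
  define Q where "Q = smult \<epsilon> ((\<Prod>i\<in>W. [:- t i, 1:]) * (\<Prod>i\<in>E. [:- t i, 1:]))"
  have polyQ: "poly Q s = \<epsilon> * ((\<Prod>i\<in>W. (s - t i)) * (\<Prod>i\<in>E. (s - t i)))" for s
    by (simp add: Q_def poly_prod)
  have dW: "degree (\<Prod>i\<in>W. [:- t i, 1:]) \<le> card W"
    using degree_prod_sum_le[OF finW, of "\<lambda>i. [:- t i, 1:]"] by simp
  have dE: "degree (\<Prod>i\<in>E. [:- t i, 1:]) \<le> card E"
    using degree_prod_sum_le[OF finE, of "\<lambda>i. [:- t i, 1:]"] by simp
  have degQ: "degree Q \<le> d"
    using degree_mult_le[of "\<Prod>i\<in>W. [:- t i, 1:]" "\<Prod>i\<in>E. [:- t i, 1:]"] dW dE E(2)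
    unfolding Q_def by (metis (no_types, lifting) add_mono degree_smult_le le_trans)
  have pfQ: "poly Q s = (\<Sum>e\<le>CARD('n). coeff Q e * s ^ e)" for s
  proof -
    have "poly Q s = (\<Sum>e\<le>degree Q. coeff Q e * s ^ e)" by (rule poly_altdef)
    also have "\<dots> = (\<Sum>e\<le>CARD('n). coeff Q e * s ^ e)"
      by (rule sum.mono_neutral_left) (use degQ d in \<open>auto simp: coeff_eq_0\<close>)
    finally show ?thesis .
  qed
  obtain h b where hb: "\<And>s. (\<Sum>e\<le>CARD('n). coeff Q e * s ^ e) = b - h \<bullet> (moment s :: real^'n)"
    using hyper_of_poly[of "coeff Q"] by blast
  have Qh: "poly Q s = b - h \<bullet> (moment s :: real^'n)" for s using pfQ hb by simp
  have QW: "poly Q (t i) = 0" if "i \<in> W" for i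
  proof -
    have "(\<Prod>i'\<in>W. (t i - t i')) = 0" using that finW by (intro prod_zero) auto
    then show ?thesis by (simp add: polyQ)
  qed
  have Qpos: "0 < poly Q (t j)" if j: "j \<in> {1..m}" "j \<notin> W" for j
  proof -
    let ?sW = "(-1::real) ^ card {i\<in>W. j < i}" and ?sE = "(-1::real) ^ card {i\<in>E. j < i}"
    let ?PW = "\<Prod>i\<in>W. (t j - t i)" and ?PE = "\<Prod>i\<in>E. (t j - t i)"
    have pW: "0 < ?sW * ?PW" by (rule prod_sign_idx[OF sm W j])
    have pE: "0 < ?sE * ?PE" by (rule prod_sign_idx[OF sm _ j(1)]) (use E W j in auto)
    have e1: "\<epsilon> * (?sW * ?sE) = 1" using par[of j] j by (simp add: power_add)
    have "poly Q (t j) = (\<epsilon> * (?sW * ?sE)) * ((?sW * ?PW) * (?sE * ?PE))"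
    proof -
      have "(\<epsilon> * (?sW * ?sE)) * ((?sW * ?PW) * (?sE * ?PE)) = \<epsilon> * (?PW * ?PE) * (?sW * ?sW) * (?sE * ?sE)"
        by (simp add: algebra_simps)
      then show ?thesis by (simp add: polyQ sign_sq)
    qed
    then show ?thesis using e1 pW pE by simp
  qed
  define P where "P = cyclic_polytope TYPE('n) t m"
  have P: "P = convex hull ((\<lambda>i. moment (t i) :: real^'n) ` {1..m})" unfolding P_def cyclic_polytope_def by simp
  have VP: "(moment (t i) :: real^'n) \<in> P" if "i \<in> {1..m}" for i unfolding P_def by (rule V_in_P[OF that])
  have "(\<lambda>i. moment (t i) :: real^'n) ` {1..m} \<subseteq> {x. h \<bullet> x \<le> b}"
  proof safe
    fix i assume i: "i \<in> {1..m}"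
    have "0 \<le> poly Q (t i)" using QW Qpos[OF i] by (cases "i \<in> W") force+
    then show "h \<bullet> moment (t i) \<le> b" using Qh[of "t i"] by simp
  qed
  then have half: "P \<subseteq> {x. h \<bullet> x \<le> b}" unfolding P by (rule hull_minimal) (rule convex_halfspace_le)
  define F where "F = P \<inter> {x. h \<bullet> x = b}"
  have Ff: "F face_of P" unfolding F_def
    by (rule face_of_Int_supporting_hyperplane_le) (use half P in auto)
  have "moment (t j0) \<notin> F" using Qpos[OF j0] Qh[of "t j0"] unfolding F_def by auto
  then have FP: "F \<noteq> P" using VP[OF j0(1)] by blast
  have "W = {i\<in>{1..m}. (moment (t i) :: real^'n) \<in> F}"
  proof safe
    fix i assume "i \<in> W"
    then show "i \<in> {1..m}" "moment (t i) \<in> F" using W QW[of i] Qh[of "t i"] VP unfolding F_def by auto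
  next
    fix i assume i: "i \<in> {1..m}" "moment (t i) \<in> F"
    show "i \<in> W"
    proof (rule ccontr)
      assume "i \<notin> W"
      then show False using Qpos[OF i(1)] Qh[of "t i"] i(2) unfolding F_def by auto
    qed
  qed
  then show ?thesis unfolding cyclic_boundary_complex_def P_def[symmetric] using Ff FP by blast
qed


theorem proposition4p1:
  fixes t :: "nat \<Rightarrow> real" and d m a :: nat
  assumes "d = CARD('n::finite)"
    and "odd d" and "5 \<le> d" and "d < m - 1"
    and "strict_mono_on {1..m} t"
    and "a = (d + 1) div 2"
  shows "kalg_iso_quot m
           (stanley_reisner_ideal m (cyclic_boundary_complex TYPE('n) t m) :: 'k::field mpoly set)
           (genideal (poly_ring_m m)
              (gens_I a 2 (m - 1) \<union> {pvar 1 * pvar m * g | g. g \<in> gens_I (a - 1) 3 (m - 2)}))"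
proof -
  obtain k where k: "d = 2 * k + 1" using assms(2) by (blast elim: oddE)
  have ak: "a = k + 1" using assms(6) k by simp
  have da: "d = 2 * a - 1" using k ak by simp
  have a3: "3 \<le> a" using assms(3) k ak by simp
  have ma: "2 * a + 1 \<le> m" using assms(4) da a3 by simp
  have char: "W \<in> cyclic_boundary_complex TYPE('n) t m \<longleftrightarrow> \<not> forb a m W" if W: "W \<subseteq> {1..m}" for W
  proof
    assume inD: "W \<in> cyclic_boundary_complex TYPE('n) t m"
    show "\<not> forb a m W"
    proof
      assume fo: "forb a m W"
      have a2: "2 \<le> a" using a3 by simp
      obtain K \<epsilon> where K: "K \<subseteq> {1..m}" "card K = 2 * a + 1" "\<epsilon> = 1 \<or> \<epsilon> = -1"
        "\<forall>k\<in>K-W. \<epsilon> * (-1) ^ card {l\<in>K. k < l} = (1::real)"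
        using combA[OF fo a2 ma] by (elim exE conjE) (rule that; assumption)
      have cK: "card K = d + 2" using K(2) da a3 by simp
      show False by (rule faceA[OF assms(1) assms(5) inD K(1) cK K(3)]) (use K(4) in blast)
    qed
  next
    assume nf: "\<not> forb a m W"
    have a2: "2 \<le> a" using a3 by simp
    obtain E \<epsilon> j0 where E: "E \<subseteq> W" "card W + card E \<le> 2 * a - 1" "\<epsilon> = 1 \<or> \<epsilon> = -1"
      "j0 \<in> {1..m}" "j0 \<notin> W"
      "\<forall>j\<in>{1..m}-W. \<epsilon> * (-1) ^ (card {i\<in>W. j < i} + card {i\<in>E. j < i}) = (1::real)"
      using combB[OF nf W a2 ma] by (elim exE conjE) (rule that; assumption)
    have cE: "card W + card E \<le> d" using E(2) da by simp
    show "W \<in> cyclic_boundary_complex TYPE('n) t m"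
      by (rule faceB[OF assms(1) assms(5) W E(1) cE E(3) E(4) E(5)]) (use E(6) in blast)
  qed
  have a2: "2 \<le> a" and m3: "3 \<le> m" using a3 ma by auto
  show ?thesis by (rule alg_part[OF char a2 m3])
qed

end
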